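(* Let $p,q\geq1$ be integers, $\alpha_0=\arctan\sqrt{q/p}$ and $P_1=(\alpha_0,\alpha_0+\pi)$. Let $(\vartheta(s),\alpha(s))$ be a trajectory of the differential system $$\dot\vartheta=3\sin\vartheta\cos\vartheta\sin(\alpha-\vartheta),\qquad \dot\alpha=q\cos\alpha\cos\vartheta-p\sin\alpha\sin\vartheta,$$ and suppose that for some $s_0$ one has $0<\vartheta(s_0)<\pi/2$ and $\vartheta(s_0)+\pi/2\leq\alpha(s_0)\leq\vartheta(s_0)+3\pi/2$. Then $\lim_{s\to-\infty}(\vartheta(s),\alpha(s))=P_1$. *)

theory Defs
  imports "HOL-Analysis.Analysis"
begin

end

theory Submission
  imports Defs
begin

lemma lip_deriv:
  fixes f f' :: "real \<Rightarrow> real"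
  assumes d: "\<And>x. (f has_real_derivative f' x) (at x)" and b: "\<And>x. \<bar>f' x\<bar> \<le> B"
  shows "\<bar>f s - f t\<bar> \<le> B * \<bar>s - t\<bar>"
proof -
  have *: "\<bar>f b - f a\<bar> \<le> B * \<bar>b - a\<bar>" if ab: "a < b" for a b
  proof -
    obtain z where "f b - f a = (b - a) * f' z" using MVT2[of a b f f'] ab d by blast
    then have "\<bar>f b - f a\<bar> = \<bar>b - a\<bar> * \<bar>f' z\<bar>" by (simp add: abs_mult)
    also have "\<dots> \<le> \<bar>b - a\<bar> * B" by (rule mult_left_mono[OF b]) simp
    finally show ?thesis by (simp add: mult.commute)
  qed
  show ?thesis
  proof (cases s t rule: linorder_cases)
    case less then show ?thesis using *[OF less] by (simp add: abs_minus_commute)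
  next
    case equal then show ?thesis by simp
  next
    case greater then show ?thesis using *[OF greater] by simp
  qed
qed

lemma barbalat:
  fixes F F' g :: "real \<Rightarrow> real"
  assumes conv: "(F \<longlongrightarrow> c) at_bot"
    and deriv: "\<And>s. s \<le> s1 \<Longrightarrow> (F has_real_derivative F' s) (at s)"
    and ge: "\<And>s. s \<le> s1 \<Longrightarrow> F' s \<ge> g s"
    and lip: "\<And>s t. s \<le> s1 \<Longrightarrow> t \<le> s1 \<Longrightarrow> \<bar>g s - g t\<bar> \<le> L * \<bar>s - t\<bar>"
    and L: "L > 0" and e: "\<epsilon> > 0"
  shows "eventually (\<lambda>s. g s < \<epsilon>) at_bot"
proof -
  define \<delta> where "\<delta> = \<epsilon> / (2 * L)"
  have dpos: "\<delta> > 0" using L e by (simp add: \<delta>_def)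
  have "eventually (\<lambda>s. dist (F s) c < \<delta> * \<epsilon> / 4) at_bot"
    using conv dpos e unfolding tendsto_iff by (meson divide_pos_pos mult_pos_pos zero_less_numeral)
  then obtain N where N: "\<And>s. s \<le> N \<Longrightarrow> \<bar>F s - c\<bar> < \<delta> * \<epsilon> / 4"
    by (auto simp: eventually_at_bot_linorder dist_real_def)
  have "g s < \<epsilon>" if s: "s \<le> min N s1 - \<delta>" for s
  proof (rule ccontr)
    assume "\<not> g s < \<epsilon>"
    hence gs: "g s \<ge> \<epsilon>" by simp
    have Fb: "\<epsilon> / 2 \<le> F' x" if "s \<le> x" "x \<le> s + \<delta>" for x
    proof -
      have "\<bar>g x - g s\<bar> \<le> L * \<bar>x - s\<bar>" using lip[of x s] that s by simp
      also have "\<dots> \<le> L * \<delta>" using that L by (intro mult_left_mono) auto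
      also have "L * \<delta> = \<epsilon> / 2" using L by (simp add: \<delta>_def)
      finally have "g x \<ge> \<epsilon> / 2" using gs by linarith
      moreover have "F' x \<ge> g x" using ge that s by simp
      ultimately show ?thesis by linarith
    qed
    define H where "H = (\<lambda>x. F x - \<epsilon> / 2 * x)"
    have "H s \<le> H (s + \<delta>)"
    proof (rule DERIV_nonneg_imp_nondecreasing[of s "s+\<delta>" H])
      fix x assume x: "s \<le> x" "x \<le> s + \<delta>"
      show "\<exists>y. (H has_real_derivative y) (at x) \<and> 0 \<le> y"
        using x s Fb[OF x]
        unfolding H_def
        by (intro exI[of _ "F' x - \<epsilon>/2"]) (auto intro!: derivative_eq_intros deriv)
    qed (use dpos in simp)
    hence "F (s + \<delta>) - F s \<ge> \<epsilon> / 2 * \<delta>" by (simp add: H_def field_simps)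
    moreover have "\<bar>F s - c\<bar> < \<delta> * \<epsilon> / 4" "\<bar>F (s + \<delta>) - c\<bar> < \<delta> * \<epsilon> / 4"
      using N s dpos by auto
    ultimately show False unfolding abs_less_iff by (simp add: mult.commute[of \<epsilon> \<delta>])
  qed
  thus ?thesis unfolding eventually_at_bot_linorder by blast
qed

lemma mono_conv:
  fixes F :: "real \<Rightarrow> real"
  assumes mono: "\<And>s t. s \<le> t \<Longrightarrow> t \<le> s1 \<Longrightarrow> F s \<le> F t"
    and lb: "\<And>s. s \<le> s1 \<Longrightarrow> F s \<ge> 0"
  shows "\<exists>c. (F \<longlongrightarrow> c) at_bot"
proof -
  define c where "c = Inf (F ` {..s1})"
  have bdd: "bdd_below (F ` {..s1})" using lb by (auto intro!: bdd_belowI)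
  have cle: "c \<le> F s" if "s \<le> s1" for s
    unfolding c_def using bdd that by (auto intro!: cInf_lower)
  have "(F \<longlongrightarrow> c) at_bot"
  proof (rule tendstoI)
    fix e :: real assume e: "e > 0"
    have "\<exists>t\<in>F ` {..s1}. t < c + e"
      using e by (intro cInf_lessD) (auto simp: c_def)
    then obtain t where t: "t \<le> s1" "F t < c + e" by auto
    have "dist (F s) c < e" if "s \<le> t" for s
      using mono[OF that t(1)] cle[of s] that t by (auto simp: dist_real_def)
    thus "eventually (\<lambda>s. dist (F s) c < e) at_bot"
      unfolding eventually_at_bot_linorder by blast
  qed
  thus ?thesis by blast
qed

lemma abs2: fixes x y :: real assumes "\<bar>x\<bar> \<le> 1" "\<bar>y\<bar> \<le> 1" shows "\<bar>x * y\<bar> \<le> 1"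
  using assms by (simp add: abs_mult mult_le_one)

lemma abs3: fixes x y z :: real assumes "\<bar>x\<bar> \<le> 1" "\<bar>y\<bar> \<le> 1" "\<bar>z\<bar> \<le> 1" shows "\<bar>x * y * z\<bar> \<le> 1"
  using assms by (simp add: abs_mult mult_le_one)

lemma sign1: fixes k A C :: real assumes "0 \<le> k" "0 \<le> A" "C < 0" shows "0 \<le> - k * A / C"
  using assms by (intro divide_nonpos_neg) auto

lemma mtri: fixes x y z b :: real assumes "\<bar>x\<bar> \<le> 1" "\<bar>y\<bar> \<le> 1" "\<bar>z\<bar> \<le> b"
  shows "\<bar>x * y * z\<bar> \<le> b"
proof -
  have "\<bar>x * y\<bar> \<le> 1" using assms by (simp add: abs_mult mult_le_one)
  then have "\<bar>x * y\<bar> * \<bar>z\<bar> \<le> 1 * b" using assms by (intro mult_mono) auto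
  then show ?thesis by (simp add: abs_mult)
qed

lemma mtri4: fixes w x y z b :: real assumes "\<bar>w\<bar> \<le> 1" "\<bar>x\<bar> \<le> 1" "\<bar>y\<bar> \<le> 1" "\<bar>z\<bar> \<le> b"
  shows "\<bar>w * x * y * z\<bar> \<le> b"
proof -
  have "\<bar>w * x\<bar> \<le> 1" using assms by (simp add: abs_mult mult_le_one)
  then show ?thesis using mtri[OF _ assms(3,4), of "w * x"] by simp
qed

lemma cabs: fixes c y b :: real assumes "0 \<le> c" "\<bar>y\<bar> \<le> b" shows "\<bar>c * y\<bar> \<le> c * b"
  using assms by (simp add: abs_mult mult_left_mono)

lemma lin8: fixes y1 y2 y3 y4 y5 y6 y7 y8 b1 b2 b3 b4 b5 b6 b7 b8 :: real
  assumes "\<bar>y1\<bar> \<le> b1" "\<bar>y2\<bar> \<le> b2" "\<bar>y3\<bar> \<le> b3" "\<bar>y4\<bar> \<le> b4"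
    "\<bar>y5\<bar> \<le> b5" "\<bar>y6\<bar> \<le> b6" "\<bar>y7\<bar> \<le> b7" "\<bar>y8\<bar> \<le> b8"
  shows "\<bar>- y1 - y2 - y3 - y4 - 3 * y5 + 3 * y6 - 3 * y7 + 3 * y8\<bar> \<le> b1 + b2 + b3 + b4 + 3 * b5 + 3 * b6 + 3 * b7 + 3 * b8"
  using assms by (simp add: abs_le_iff)

theorem lemma4p11:
  fixes p q :: nat and th al :: "real \<Rightarrow> real" and s0 :: real
  assumes "p \<ge> 1" and "q \<ge> 1"
    and th_deriv: "\<And>s. (th has_real_derivative
                     3 * sin (th s) * cos (th s) * sin (al s - th s)) (at s)"
    and al_deriv: "\<And>s. (al has_real_derivative
                     real q * cos (al s) * cos (th s) - real p * sin (al s) * sin (th s)) (at s)"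
    and "0 < th s0" and "th s0 < pi / 2"
    and "th s0 + pi / 2 \<le> al s0" and "al s0 \<le> th s0 + 3 * pi / 2"
  shows "((\<lambda>s. (th s, al s)) \<longlongrightarrow>
           (arctan (sqrt (real q / real p)), arctan (sqrt (real q / real p)) + pi)) at_bot"
proof -
  note assms0 = assms
  define ph where "ph = (\<lambda>s. al s - th s)"
  define th' where "th' = (\<lambda>s. 3 * sin (th s) * cos (th s) * sin (al s - th s))"
  define al' where "al' = (\<lambda>s. real q * cos (al s) * cos (th s) - real p * sin (al s) * sin (th s))"
  have thD: "\<And>s. (th has_real_derivative th' s) (at s)" using th_deriv by (simp add: th'_def)
  have alD: "\<And>s. (al has_real_derivative al' s) (at s)" using al_deriv by (simp add: al'_def)
  have phD: "\<And>s. (ph has_real_derivative (al' s - th' s)) (at s)"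
    unfolding ph_def by (auto intro!: derivative_eq_intros alD thD)
  have th_cont: "\<And>s. isCont th s" using DERIV_isCont thD by blast
  have ph_cont: "\<And>s. isCont ph s" using DERIV_isCont phD by blast
  have thb: "\<bar>th' s\<bar> \<le> 3" for s
    using abs3[OF abs_sin_le_one abs_cos_le_one abs_sin_le_one, of "th s" "th s" "al s - th s"]
    unfolding th'_def by (simp add: abs_mult)
  have alb: "\<bar>al' s\<bar> \<le> p + q" for s
  proof -
    have "\<bar>al' s\<bar> \<le> q * \<bar>cos (al s) * cos (th s)\<bar> + p * \<bar>sin (al s) * sin (th s)\<bar>"
      unfolding al'_def using abs_triangle_ineq4[of "real q * (cos (al s) * cos (th s))" "real p * (sin (al s) * sin (th s))"]
      by (simp add: abs_mult mult.assoc)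
    also have "\<dots> \<le> real q * 1 + real p * 1"
      by (intro add_mono mult_left_mono abs2 abs_sin_le_one abs_cos_le_one) auto
    finally show ?thesis by simp
  qed
  have phb: "\<bar>al' s - th' s\<bar> \<le> p + q + 3" for s
    using thb[of s] alb[of s] by linarith
  have cal: "cos (al s) = cos (th s) * cos (ph s) - sin (th s) * sin (ph s)" for s
    using cos_add[of "th s" "ph s"] by (simp add: ph_def)
  have sal: "sin (al s) = sin (th s) * cos (ph s) + cos (th s) * sin (ph s)" for s
    using sin_add[of "th s" "ph s"] by (simp add: ph_def)
  have phd_eq: "al' s - th' s = cos (ph s) * (q * cos (th s)^2 - p * sin (th s)^2)
       - (p+q+3) * sin (th s) * cos (th s) * sin (ph s)" for s
    unfolding al'_def th'_def cal sal by (simp add: ph_def power2_eq_square algebra_simps)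
  have phx: "al s - th s = ph s" for s by (simp add: ph_def)
  have al_eq: "al' s = cos (ph s) * (q * cos (th s)^2 - p * sin (th s)^2)
       - (p+q) * sin (th s) * cos (th s) * sin (ph s)" for s
    unfolding al'_def cal sal by (simp add: power2_eq_square algebra_simps)
  define G where "G = (\<lambda>s. 0 < th s \<and> th s < pi/2 \<and> pi/2 < ph s \<and> ph s < 3*pi/2)"
  define E where "E = (\<lambda>s. - real p * ln (cos (th s)) - real q * ln (sin (th s)) - 3 * ln (- cos (ph s)))"
  define dE where "dE = (\<lambda>s. - 3 * (real p + real q + 3) * sin (th s) * cos (th s) * (sin (ph s))^2 / cos (ph s))"
  have Gtrig: "0 < sin (th s) \<and> 0 < cos (th s) \<and> cos (ph s) < 0" if "G s" for s
  proof -
    have "0 < cos (ph s - pi)" using that unfolding G_def by (intro cos_gt_zero_pi) auto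
    then show ?thesis using that unfolding G_def by (auto intro!: sin_gt_zero cos_gt_zero_pi)
  qed
  have ED: "(E has_real_derivative dE s) (at s)" if "G s" for s
  proof -
    note tr = Gtrig[OF that]
    show ?thesis unfolding E_def dE_def
      apply (rule DERIV_cong)
       apply (rule derivative_eq_intros thD phD refl | simp add: tr)+
      apply (simp add: al_eq th'_def phx)
      using tr by (auto simp: field_simps power2_eq_square) (simp add: algebra_simps)?
  qed
  have dE_nonneg: "0 \<le> dE s" if "G s" for s
  proof -
    note tr = Gtrig[OF that]
    have "dE s = - (3 * (real p + real q + 3)) * (sin (th s) * cos (th s) * (sin (ph s))^2) / cos (ph s)"
      unfolding dE_def by (simp add: mult.assoc)
    also have "0 \<le> \<dots>" using tr by (intro sign1) auto
    finally show ?thesis .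
  qed
  have E_terms: "0 \<le> - real p * ln (cos (th s)) \<and> 0 \<le> - real q * ln (sin (th s)) \<and> 0 \<le> - 3 * ln (- cos (ph s))" if "G s" for s
  proof -
    note tr = Gtrig[OF that]
    have "ln (cos (th s)) \<le> 0" "ln (sin (th s)) \<le> 0" "ln (- cos (ph s)) \<le> 0"
      using tr by (auto simp: ln_le_zero_iff)
    then show ?thesis by (simp add: mult_nonneg_nonpos)
  qed
  obtain s1 where s1: "s1 \<le> s0" "G s1"
  proof -
    have evl: "eventually P (at_left s0) = (\<exists>b<s0. \<forall>y>b. y < s0 \<longrightarrow> P y)" for P
      by (rule eventually_at_left[of "s0 - 1"]) simp
    have thl: "(th \<longlongrightarrow> th s0) (at_left s0)" using th_cont[of s0] unfolding isCont_def filterlim_at_split by blast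
    have phl: "(ph \<longlongrightarrow> ph s0) (at_left s0)" using ph_cont[of s0] unfolding isCont_def filterlim_at_split by blast
    have ph0: "pi/2 \<le> ph s0" "ph s0 \<le> 3*pi/2" using assms0(7,8) by (auto simp: ph_def)
    have e1: "eventually (\<lambda>s. 0 < th s) (at_left s0)" using order_tendstoD(1)[OF thl] assms0(5) by blast
    have e2: "eventually (\<lambda>s. th s < pi/2) (at_left s0)" using order_tendstoD(2)[OF thl] assms0(6) by blast
    have sc0: "0 < sin (th s0)" "0 < cos (th s0)" using assms0(5,6) by (auto intro!: sin_gt_zero cos_gt_zero_pi)
    have e3: "eventually (\<lambda>s. pi/2 < ph s) (at_left s0)"
    proof (cases "ph s0 = pi/2")
      case True
      have "al' s0 - th' s0 < 0" unfolding phd_eq True using sc0 by simp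
      from DERIV_neg_dec_left[OF phD this] obtain d where d: "d>0" "\<forall>h>0. h<d \<longrightarrow> ph s0 < ph (s0 - h)" by blast
      have "\<forall>y>s0 - d. y<s0 \<longrightarrow> pi/2 < ph y"
      proof (intro allI impI)
        fix y assume "s0 - d < y" "y < s0"
        then show "pi/2 < ph y" using d(2)[rule_format, of "s0 - y"] True by simp
      qed
      then show ?thesis unfolding evl using d(1) by (intro exI[of _ "s0 - d"]) auto
    next
      case False then have "pi/2 < ph s0" using ph0 by simp
      then show ?thesis using order_tendstoD(1)[OF phl] by blast
    qed
    have e4: "eventually (\<lambda>s. ph s < 3*pi/2) (at_left s0)"
    proof (cases "ph s0 = 3*pi/2")
      case True
      have cs: "cos (3*pi/2) = 0" "sin (3*pi/2) = -1"
        using cos_periodic_pi[of "pi/2"] sin_periodic_pi[of "pi/2"] by (simp_all add: algebra_simps)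
      have "al' s0 - th' s0 > 0" unfolding phd_eq True cs using sc0 by simp
      from DERIV_pos_inc_left[OF phD this] obtain d where d: "d>0" "\<forall>h>0. h<d \<longrightarrow> ph (s0 - h) < ph s0" by blast
      have "\<forall>y>s0 - d. y<s0 \<longrightarrow> ph y < 3*pi/2"
      proof (intro allI impI)
        fix y assume "s0 - d < y" "y < s0"
        then show "ph y < 3*pi/2" using d(2)[rule_format, of "s0 - y"] True by simp
      qed
      then show ?thesis unfolding evl using d(1) by (intro exI[of _ "s0 - d"]) auto
    next
      case False then have "ph s0 < 3*pi/2" using ph0 by simp
      then show ?thesis using order_tendstoD(2)[OF phl] by blast
    qed
    have "eventually G (at_left s0)" using e1 e2 e3 e4 unfolding G_def by eventually_elim auto
    then obtain b where "b < s0" "\<forall>y>b. y < s0 \<longrightarrow> G y" unfolding evl by auto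
    then have "G ((b + s0)/2)" by auto
    then show thesis using that[of "(b+s0)/2"] \<open>b < s0\<close> by auto
  qed
  define M where "M = E s1"
  define e1 where "e1 = exp (- M / q)"
  define e2 where "e2 = exp (- M / p)"
  define e3 where "e3 = exp (- M / 3)"
  have key: "e1 \<le> sin (th u) \<and> e2 \<le> cos (th u) \<and> e3 \<le> - cos (ph u) \<and> E u \<le> M"
    if "u \<le> s1" "\<forall>v\<in>{u..s1}. G v" for u
  proof -
    have Eu: "E u \<le> M" unfolding M_def
    proof (rule DERIV_nonneg_imp_nondecreasing[of u s1 E])
      fix x assume "u \<le> x" "x \<le> s1"
      then have "G x" using that by auto
      then show "\<exists>y. (E has_real_derivative y) (at x) \<and> 0 \<le> y"
        using ED dE_nonneg by blast
    qed (use that in auto)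
    have Gu: "G u" using that by auto
    note t = E_terms[OF Gu]
    note tr = Gtrig[OF Gu]
    have Esum: "E u = (- real p * ln (cos (th u))) + (- real q * ln (sin (th u))) + (- 3 * ln (- cos (ph u)))"
      by (simp add: E_def)
    have qp: "real q > 0" "real p > 0" using assms0(1,2) by auto
    have l1: "- real q * ln (sin (th u)) \<le> M" "- real p * ln (cos (th u)) \<le> M" "- 3 * ln (- cos (ph u)) \<le> M"
      using Eu t Esum by linarith+
    have "- M / q \<le> ln (sin (th u))" "- M / p \<le> ln (cos (th u))" "- M / 3 \<le> ln (- cos (ph u))"
      using l1 qp by (simp_all add: field_simps)
    then have "exp (- M / q) \<le> exp (ln (sin (th u)))" "exp (- M / p) \<le> exp (ln (cos (th u)))"
      "exp (- M / 3) \<le> exp (ln (- cos (ph u)))" by simp_all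
    then show ?thesis using tr Eu by (simp add: e1_def e2_def e3_def)
  qed
  have Gopen: "open {t. G t}"
  proof -
    have ct: "continuous_on UNIV th" "continuous_on UNIV ph"
      using th_cont ph_cont by (auto intro!: continuous_at_imp_continuous_on)
    show ?thesis unfolding G_def
      by (intro open_Collect_conj open_Collect_less continuous_on_const ct)
  qed
  have inv: "G u" if "u \<le> s1" for u
  proof (rule ccontr)
    assume nG: "\<not> G u"
    define T where "T = {t \<in> {u..s1}. \<not> G t}"
    have Tc: "closed T"
    proof -
      have "T = {u..s1} \<inter> - {t. G t}" by (auto simp: T_def)
      then show ?thesis using Gopen by (simp add: closed_Int open_closed[symmetric] closed_Compl)
    qed
    have uT: "u \<in> T" using nG that by (simp add: T_def)
    have bT: "bdd_above T" by (auto simp: T_def intro!: bdd_aboveI[of _ s1])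
    define m where "m = Sup T"
    have mT: "m \<in> T" unfolding m_def using closed_contains_Sup[OF _ bT Tc] uT by blast
    have um: "u \<le> m" unfolding m_def using bT uT by (rule cSup_upper[rotated])
    have ms1: "m < s1" using mT s1(2) by (auto simp: T_def le_less)
    have Gv: "G v" if "m < v" "v \<le> s1" for v
    proof (rule ccontr)
      assume "\<not> G v"
      then have "v \<in> T" using that um by (auto simp: T_def)
      then have "v \<le> m" unfolding m_def using bT by (rule cSup_upper)
      then show False using that by simp
    qed
    have kv: "e1 \<le> sin (th v) \<and> e2 \<le> cos (th v) \<and> e3 \<le> - cos (ph v) \<and>
       0 < th v \<and> th v < pi/2 \<and> pi/2 < ph v \<and> ph v < 3*pi/2" if "m < v" "v \<le> s1" for v
      using key[of v] Gv that by (auto simp: G_def)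
    have ev: "eventually (\<lambda>v. e1 \<le> sin (th v) \<and> e2 \<le> cos (th v) \<and> e3 \<le> - cos (ph v) \<and>
       0 < th v \<and> th v < pi/2 \<and> pi/2 < ph v \<and> ph v < 3*pi/2) (at_right m)"
      using eventually_at_right_real[OF ms1] by eventually_elim (use kv in auto)
    have thl: "(th \<longlongrightarrow> th m) (at_right m)" using th_cont[of m] unfolding isCont_def filterlim_at_split by blast
    have phl: "(ph \<longlongrightarrow> ph m) (at_right m)" using ph_cont[of m] unfolding isCont_def filterlim_at_split by blast
    have nb: "at_right m \<noteq> (bot :: real filter)" by simp
    have b1: "e1 \<le> sin (th m)"
      by (rule tendsto_lowerbound[OF tendsto_sin[OF thl] _ nb]) (use ev in eventually_elim, auto)
    have b2: "e2 \<le> cos (th m)"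
      by (rule tendsto_lowerbound[OF tendsto_cos[OF thl] _ nb]) (use ev in eventually_elim, auto)
    have b3: "e3 \<le> - cos (ph m)"
      by (rule tendsto_lowerbound[OF tendsto_minus[OF tendsto_cos[OF phl]] _ nb]) (use ev in eventually_elim, auto)
    have b4: "0 \<le> th m"
      by (rule tendsto_lowerbound[OF thl _ nb]) (use ev in eventually_elim, auto)
    have b5: "th m \<le> pi/2"
      by (rule tendsto_upperbound[OF thl _ nb]) (use ev in eventually_elim, auto)
    have b6: "pi/2 \<le> ph m"
      by (rule tendsto_lowerbound[OF phl _ nb]) (use ev in eventually_elim, auto)
    have b7: "ph m \<le> 3*pi/2"
      by (rule tendsto_upperbound[OF phl _ nb]) (use ev in eventually_elim, auto)
    have pos: "0 < e1" "0 < e2" "0 < e3" by (auto simp: e1_def e2_def e3_def)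
    have cs: "cos (3*pi/2) = 0"
      using cos_periodic_pi[of "pi/2"] by (simp add: algebra_simps)
    have "th m \<noteq> 0" using b1 pos by auto
    moreover have "th m \<noteq> pi/2" using b2 pos by (metis cos_pi_half not_le)
    moreover have "ph m \<noteq> pi/2"
    proof
      assume h: "ph m = pi/2"
      have "cos (ph m) = 0" unfolding h by simp
      then show False using b3 pos by simp
    qed
    moreover have "ph m \<noteq> 3*pi/2"
    proof
      assume h: "ph m = 3*pi/2"
      have "cos (ph m) = 0" unfolding h by (rule cs)
      then show False using b3 pos by simp
    qed
    ultimately have "G m" using b4 b5 b6 b7 by (auto simp: G_def)
    then show False using mT by (simp add: T_def)
  qed
  have pos: "0 < e1" "0 < e2" "0 < e3" by (auto simp: e1_def e2_def e3_def)
  have bnd: "e1 \<le> sin (th u) \<and> e2 \<le> cos (th u) \<and> e3 \<le> - cos (ph u) \<and> E u \<le> M" if "u \<le> s1" for u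
    using key[OF that] inv by auto
  have Emono: "E s \<le> E t" if "s \<le> t" "t \<le> s1" for s t
  proof (rule DERIV_nonneg_imp_nondecreasing[of s t E])
    fix x assume "s \<le> x" "x \<le> t"
    then have "G x" using that inv by auto
    then show "\<exists>y. (E has_real_derivative y) (at x) \<and> 0 \<le> y"
      using ED dE_nonneg by blast
  qed (use that in auto)
  have Enn: "0 \<le> E s" if "s \<le> s1" for s
    using E_terms[OF inv[OF that]] by (simp add: E_def)
  obtain cE where cE: "(E \<longlongrightarrow> cE) at_bot" using mono_conv[where F=E and ?s1.0=s1] Emono Enn by blast
  define K where "K = 3 * (real p + real q + 3) * (e1 * e2)"
  have Kpos: "K > 0" using pos by (simp add: K_def)
  define gS where "gS = (\<lambda>s. K * (sin (ph s))^2)"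
  have ED': "(E has_real_derivative dE s) (at s)" if "s \<le> s1" for s
    using ED inv that by blast
  have dE_ge: "gS s \<le> dE s" if "s \<le> s1" for s
  proof -
    note tr = Gtrig[OF inv[OF that]]
    note b = bnd[OF that]
    have ee: "e1 * e2 \<le> sin (th s) * cos (th s)" using b pos by (intro mult_mono) auto
    have c1: "1 \<le> 1 / (- cos (ph s))" using tr cos_ge_minus_one[of "ph s"] by (simp add: field_simps)
    have "dE s = (3 * (real p + real q + 3) * (sin (ph s))^2) * (sin (th s) * cos (th s)) * (1 / (- cos (ph s)))"
      unfolding dE_def using tr by (simp add: field_simps)
    also have "\<dots> \<ge> (3 * (real p + real q + 3) * (sin (ph s))^2) * (e1 * e2) * 1"
    proof (rule mult_mono)
      show "3 * (real p + real q + 3) * (sin (ph s))\<^sup>2 * (e1 * e2) \<le> 3 * (real p + real q + 3) * (sin (ph s))\<^sup>2 * (sin (th s) * cos (th s))"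
        using ee by (intro mult_left_mono) auto
      show "0 \<le> 3 * (real p + real q + 3) * (sin (ph s))\<^sup>2 * (sin (th s) * cos (th s))"
        using tr by simp
    qed (use c1 in auto)
    finally show ?thesis unfolding gS_def K_def by (simp only: mult_ac)
  qed
  have gS_lip: "\<bar>gS s - gS t\<bar> \<le> (K * (2 * (p + q + 3))) * \<bar>s - t\<bar>" for s t
  proof (rule lip_deriv)
    fix x
    show "(gS has_real_derivative K * (2 * (sin (ph x) * cos (ph x) * (al' x - th' x)))) (at x)"
      unfolding gS_def by (auto intro!: derivative_eq_intros phD simp: power2_eq_square)
    have "\<bar>sin (ph x) * cos (ph x) * (al' x - th' x)\<bar> \<le> p + q + 3"
      by (intro mtri abs_sin_le_one abs_cos_le_one phb)
    then show "\<bar>K * (2 * (sin (ph x) * cos (ph x) * (al' x - th' x)))\<bar> \<le> K * (2 * (p + q + 3))"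
      using Kpos by (simp add: abs_mult)
  qed
  have gS_ev: "eventually (\<lambda>s. gS s < \<epsilon>) at_bot" if "\<epsilon> > 0" for \<epsilon>
    by (rule barbalat[OF cE ED' dE_ge gS_lip _ that]) (use Kpos in auto)
  have sin_lim: "((\<lambda>s. sin (ph s)) \<longlongrightarrow> 0) at_bot"
  proof (rule tendstoI)
    fix e :: real assume e: "e > 0"
    show "eventually (\<lambda>s. dist (sin (ph s)) 0 < e) at_bot"
    proof -
      have "eventually (\<lambda>s. gS s < K * e^2) at_bot" using gS_ev Kpos e by simp
      then show ?thesis
      proof eventually_elim
        case (elim s)
        then have "(sin (ph s))^2 < e^2" using Kpos by (simp add: gS_def)
        then have "\<bar>sin (ph s)\<bar>^2 < e^2" by simp
        then have "\<bar>sin (ph s)\<bar> < e" by (rule power_less_imp_less_base[OF _ less_imp_le[OF e]])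
        then show ?case by (simp add: dist_real_def)
      qed
    qed
  qed
  have ph_lim: "(ph \<longlongrightarrow> pi) at_bot"
  proof -
    have ev: "eventually (\<lambda>s. pi + arcsin (- sin (ph s)) = ph s) at_bot"
      unfolding eventually_at_bot_linorder
    proof (intro exI[of _ s1] allI impI)
      fix s assume "s \<le> s1"
      then have "G s" by (rule inv)
      then have "arcsin (sin (ph s - pi)) = ph s - pi" unfolding G_def by (intro arcsin_sin) auto
      then show "pi + arcsin (- sin (ph s)) = ph s" by (simp add: sin_minus_pi)
    qed
    have "((\<lambda>s. pi + arcsin (- sin (ph s))) \<longlongrightarrow> pi + arcsin (- 0)) at_bot"
      by (intro tendsto_add tendsto_const isCont_tendsto_compose[OF isCont_arcsin] tendsto_minus sin_lim) auto
    then have "((\<lambda>s. pi + arcsin (- sin (ph s))) \<longlongrightarrow> pi) at_bot" by simp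
    then show ?thesis using tendsto_cong[OF ev] by blast
  qed
  define D where "D = (\<lambda>s. al' s - th' s)"
  define D' where "D' = (\<lambda>s. real q * (- (sin (al s) * cos (th s) * al' s) - cos (al s) * sin (th s) * th' s)
     - real p * (cos (al s) * sin (th s) * al' s + sin (al s) * cos (th s) * th' s)
     - 3 * (cos (th s) * cos (th s) * sin (al s - th s) * th' s - sin (th s) * sin (th s) * sin (al s - th s) * th' s
            + sin (th s) * cos (th s) * cos (al s - th s) * al' s - sin (th s) * cos (th s) * cos (al s - th s) * th' s))"
  define B where "B = real q * (real p + real q + 3) + real p * (real p + real q + 3) + 3 * (3 + 3 + (real p + real q) + 3)"
  have Bpos: "B > 0"
  proof -
    have "0 \<le> real q * (real p + real q + 3)" "0 \<le> real p * (real p + real q + 3)" "0 \<le> real p" "0 \<le> real q" by simp_all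
    then show ?thesis unfolding B_def by (intro add_nonneg_pos[OF add_nonneg_nonneg]) auto
  qed
  have DD: "(D has_real_derivative D' s) (at s)" for s
    unfolding D_def al'_def th'_def
    apply (rule DERIV_cong)
     apply (rule derivative_eq_intros alD thD refl)+
    apply (simp add: D'_def al'_def[symmetric] th'_def[symmetric] algebra_simps)
    done
  have D'b: "\<bar>D' s\<bar> \<le> B" for s
  proof -
    have A: "\<bar>al' s\<bar> \<le> real p + real q" using alb[of s] by simp
    have T: "\<bar>th' s\<bar> \<le> 3" by (rule thb)
    have y1: "\<bar>real q * (sin (al s) * cos (th s) * al' s)\<bar> \<le> real q * (real p + real q)"
      by (intro cabs mtri abs_sin_le_one abs_cos_le_one A) auto
    have y2: "\<bar>real q * (cos (al s) * sin (th s) * th' s)\<bar> \<le> real q * 3"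
      by (intro cabs mtri abs_sin_le_one abs_cos_le_one T) auto
    have y3: "\<bar>real p * (cos (al s) * sin (th s) * al' s)\<bar> \<le> real p * (real p + real q)"
      by (intro cabs mtri abs_sin_le_one abs_cos_le_one A) auto
    have y4: "\<bar>real p * (sin (al s) * cos (th s) * th' s)\<bar> \<le> real p * 3"
      by (intro cabs mtri abs_sin_le_one abs_cos_le_one T) auto
    have y5: "\<bar>cos (th s) * cos (th s) * sin (al s - th s) * th' s\<bar> \<le> 3"
      by (intro mtri4 abs_sin_le_one abs_cos_le_one T)
    have y6: "\<bar>sin (th s) * sin (th s) * sin (al s - th s) * th' s\<bar> \<le> 3"
      by (intro mtri4 abs_sin_le_one abs_cos_le_one T)
    have y7: "\<bar>sin (th s) * cos (th s) * cos (al s - th s) * al' s\<bar> \<le> real p + real q"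
      by (intro mtri4 abs_sin_le_one abs_cos_le_one A)
    have y8: "\<bar>sin (th s) * cos (th s) * cos (al s - th s) * th' s\<bar> \<le> 3"
      by (intro mtri4 abs_sin_le_one abs_cos_le_one T)
    have eq: "D' s = - (real q * (sin (al s) * cos (th s) * al' s)) - real q * (cos (al s) * sin (th s) * th' s)
      - real p * (cos (al s) * sin (th s) * al' s) - real p * (sin (al s) * cos (th s) * th' s)
      - 3 * (cos (th s) * cos (th s) * sin (al s - th s) * th' s) + 3 * (sin (th s) * sin (th s) * sin (al s - th s) * th' s)
      - 3 * (sin (th s) * cos (th s) * cos (al s - th s) * al' s) + 3 * (sin (th s) * cos (th s) * cos (al s - th s) * th' s)"
      unfolding D'_def by (simp add: algebra_simps)
    have Beq: "B = real q * (real p + real q) + real q * 3 + real p * (real p + real q) + real p * 3 + 3 * 3 + 3 * 3 + 3 * (real p + real q) + 3 * 3"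
      unfolding B_def by (simp add: algebra_simps)
    show ?thesis unfolding eq Beq by (rule lin8[OF y1 y2 y3 y4 y5 y6 y7 y8])
  qed
  have D_lip: "\<bar>D s - D t\<bar> \<le> B * \<bar>s - t\<bar>" for s t
    by (rule lip_deriv[OF DD D'b])
  have phD': "(ph has_real_derivative D s) (at s)" for s using phD by (simp add: D_def)
  have mphD: "((\<lambda>s. - ph s) has_real_derivative - D s) (at s)" for s
    by (intro derivative_intros phD')
  have mph_lim: "((\<lambda>s. - ph s) \<longlongrightarrow> - pi) at_bot" by (intro tendsto_minus ph_lim)
  have D_lim: "(D \<longlongrightarrow> 0) at_bot"
  proof (rule tendstoI)
    fix e :: real assume e: "e > 0"
    have "eventually (\<lambda>s. D s < e) at_bot"
      by (rule barbalat[of ph pi s1 D D B e, OF ph_lim phD' _ D_lip Bpos e]) simp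
    moreover have "eventually (\<lambda>s. - D s < e) at_bot"
      by (rule barbalat[of "\<lambda>s. - ph s" "- pi" s1 "\<lambda>s. - D s" "\<lambda>s. - D s" B e, OF mph_lim mphD _ _ Bpos e])
        (use D_lip in \<open>auto simp: abs_minus_commute\<close>)
    ultimately show "eventually (\<lambda>s. dist (D s) 0 < e) at_bot"
      by eventually_elim (auto simp: dist_real_def)
  qed
  define W where "W = (\<lambda>s. real q * cos (th s)^2 - real p * sin (th s)^2)"
  define k where "k = real p + real q + 3"
  have W_lim: "(W \<longlongrightarrow> 0) at_bot"
  proof (rule Lim_null_comparison)
    show "eventually (\<lambda>s. norm (W s) \<le> (\<bar>D s\<bar> + k * \<bar>sin (ph s)\<bar>) / e3) at_bot"
      unfolding eventually_at_bot_linorder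
    proof (intro exI[of _ s1] allI impI)
      fix s assume s: "s \<le> s1"
      note b = bnd[OF s]
      have eqD: "cos (ph s) * W s = D s + k * (sin (th s) * cos (th s) * sin (ph s))"
        unfolding D_def phd_eq W_def k_def by (simp add: algebra_simps)
      have "\<bar>sin (th s) * cos (th s) * sin (ph s)\<bar> \<le> \<bar>sin (ph s)\<bar>"
        by (intro mtri abs_sin_le_one abs_cos_le_one) simp
      then have "\<bar>k * (sin (th s) * cos (th s) * sin (ph s))\<bar> \<le> k * \<bar>sin (ph s)\<bar>"
        by (intro cabs) (auto simp: k_def)
      then have "\<bar>cos (ph s) * W s\<bar> \<le> \<bar>D s\<bar> + k * \<bar>sin (ph s)\<bar>"
        unfolding eqD by (rule order_trans[OF abs_triangle_ineq add_left_mono])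
      moreover have "e3 * \<bar>W s\<bar> \<le> \<bar>cos (ph s) * W s\<bar>"
      proof -
        have "e3 \<le> \<bar>cos (ph s)\<bar>" using b by linarith
        then have "e3 * \<bar>W s\<bar> \<le> \<bar>cos (ph s)\<bar> * \<bar>W s\<bar>" by (rule mult_right_mono) simp
        then show ?thesis by (simp add: abs_mult)
      qed
      ultimately have "e3 * \<bar>W s\<bar> \<le> \<bar>D s\<bar> + k * \<bar>sin (ph s)\<bar>" by linarith
      then show "norm (W s) \<le> (\<bar>D s\<bar> + k * \<bar>sin (ph s)\<bar>) / e3"
        using pos by (simp add: field_simps)
    qed
    have "((\<lambda>s. (\<bar>D s\<bar> + k * \<bar>sin (ph s)\<bar>) / e3) \<longlongrightarrow> (\<bar>0\<bar> + k * \<bar>0\<bar>) / e3) at_bot"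
      by (intro tendsto_intros D_lim sin_lim) (use pos in auto)
    then show "((\<lambda>s. (\<bar>D s\<bar> + k * \<bar>sin (ph s)\<bar>) / e3) \<longlongrightarrow> 0) at_bot" by simp
  qed
  have qp: "real q > 0" "real p > 0" using assms0(1,2) by auto
  have tan2_lim: "((\<lambda>s. tan (th s)^2) \<longlongrightarrow> real q / real p) at_bot"
  proof -
    have "((\<lambda>s. tan (th s)^2 - real q / real p) \<longlongrightarrow> 0) at_bot"
    proof (rule Lim_null_comparison)
      show "eventually (\<lambda>s. norm (tan (th s)^2 - real q / real p) \<le> \<bar>W s\<bar> / (real p * e2^2)) at_bot"
        unfolding eventually_at_bot_linorder
      proof (intro exI[of _ s1] allI impI)
        fix s assume s: "s \<le> s1"
        note b = bnd[OF s]
        have c0: "cos (th s) > 0" using b pos by linarith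
        have "tan (th s)^2 - real q / real p = - W s / (real p * cos (th s)^2)"
          unfolding W_def tan_def using c0 qp by (simp add: field_simps power2_eq_square)
        then have "norm (tan (th s)^2 - real q / real p) = \<bar>W s\<bar> / (real p * cos (th s)^2)"
          using c0 qp by (simp add: abs_divide abs_mult)
        also have "\<dots> \<le> \<bar>W s\<bar> / (real p * e2^2)"
          using b pos qp by (intro divide_left_mono mult_left_mono power_mono mult_pos_pos) auto
        finally show "norm (tan (th s)^2 - real q / real p) \<le> \<bar>W s\<bar> / (real p * e2^2)" .
      qed
      have "((\<lambda>s. \<bar>W s\<bar> / (real p * e2^2)) \<longlongrightarrow> \<bar>0\<bar> / (real p * e2^2)) at_bot"
        by (intro tendsto_intros W_lim) (use pos qp in auto)
      then show "((\<lambda>s. \<bar>W s\<bar> / (real p * e2^2)) \<longlongrightarrow> 0) at_bot" by simp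
    qed
    then have "((\<lambda>s. tan (th s)^2 - real q / real p + real q / real p) \<longlongrightarrow> 0 + real q / real p) at_bot"
      by (intro tendsto_add tendsto_const)
    then show ?thesis by simp
  qed
  have th_lim: "(th \<longlongrightarrow> arctan (sqrt (real q / real p))) at_bot"
  proof -
    have ev: "eventually (\<lambda>s. arctan (sqrt (tan (th s)^2)) = th s) at_bot"
      unfolding eventually_at_bot_linorder
    proof (intro exI[of _ s1] allI impI)
      fix s assume "s \<le> s1"
      then have g: "G s" by (rule inv)
      then have "tan (th s) > 0" unfolding G_def by (intro tan_gt_zero) auto
      then have "sqrt (tan (th s)^2) = tan (th s)" by simp
      then show "arctan (sqrt (tan (th s)^2)) = th s" using g unfolding G_def
        by (simp add: arctan_tan)
    qed
    have "((\<lambda>s. arctan (sqrt (tan (th s)^2))) \<longlongrightarrow> arctan (sqrt (real q / real p))) at_bot"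
      by (intro tendsto_arctan tendsto_real_sqrt tan2_lim)
    then show ?thesis using tendsto_cong[OF ev] by blast
  qed
  have al_lim: "(al \<longlongrightarrow> arctan (sqrt (real q / real p)) + pi) at_bot"
  proof -
    have "((\<lambda>s. th s + ph s) \<longlongrightarrow> arctan (sqrt (real q / real p)) + pi) at_bot"
      by (intro tendsto_add th_lim ph_lim)
    then show ?thesis by (simp add: ph_def)
  qed
  show ?thesis by (intro tendsto_Pair th_lim al_lim)
qed

end
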